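(* Let $P=\{p_1,\dots,p_n\}$ be weighted points in $\mathbb{R}^2$ with total weight $1$, let $S=\{s_1,\dots,s_m\}$ be line segments in $\mathbb{R}^2$ of total length $1$, and let $0<\delta\le\frac14$. Let $\tau$ be the transport plan produced by the construction described in the context, and let $\tau^*$ be an optimal transport plan between $P$ and $S$. Then $\|\tau\|\le(1+17\delta)\|\tau^*\|$.
   Context: Each segment's mass equals its length and is spread uniformly over it (density one). A transport plan from $P$ to $S$ assigns to each $p\in P$ and each point $x$ on the segments a density $\tau_p(x)\in[0,1]$ such that each $p$ sends total mass $\|p\|$ (its weight) and each point $x$ receives total density $1$; its cost is $\|\tau\|=\sum_p\int\tau_p(x)\,\|p-x\|_2\,dx$, and $\|\tau^*\|$ is the minimum cost (earth mover's distance). Construction: (1) Subdivide $S$: repeatedly, for each current subsegment $s'$, if some point of $P$ has all of $s'$ within Euclidean distance $\delta/(nm)$, leave $s'$; otherwise, if some $p\in P$ has ratio of largest to smallest distance from $p$ to points of $s'$ exceeding $1+\delta$, cut $s'$ in half. Call the resulting subsegments $Q$. (2) Choose an arbitrary point on each $q\in Q$ with weight equal to the length of $q$; call this weighted point set $T$. (3) Compute an optimal transport plan $\nu$ between the weighted point sets $P$ and $T$ (Euclidean distances). (4) Obtain $\tau$ by spreading the mass that $\nu$ sends to each point $t\in T$ uniformly over the subsegment $q\in Q$ from which $t$ was chosen. *)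

theory Defs
  imports "HOL-Analysis.Analysis"
begin

(* Points of P: p i (i < n) with weight w i.  Segments of S: s_j = closed_segment (a j) (b j),
   j < m, parametrised by  seg a b j t = a j + t (b j - a j),  t in [0,1]; a point at parameter t
   carries length density dist (a j) (b j) dt. *)

definition seg :: "(nat \<Rightarrow> real^2) \<Rightarrow> (nat \<Rightarrow> real^2) \<Rightarrow> nat \<Rightarrow> real \<Rightarrow> real^2" where
  "seg a b j t = a j + t *\<^sub>R (b j - a j)"

text \<open>Continuous transport plan from P to S: tau i j t is the density sent by p i to the
  point of segment j with parameter t.\<close>
definition is_plan :: "nat \<Rightarrow> nat \<Rightarrow> (nat \<Rightarrow> real) \<Rightarrow> (nat \<Rightarrow> real^2) \<Rightarrow> (nat \<Rightarrow> real^2)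
    \<Rightarrow> (nat \<Rightarrow> nat \<Rightarrow> real \<Rightarrow> real) \<Rightarrow> bool" where
  "is_plan n m w a b tau \<longleftrightarrow>
     (\<forall>i<n. \<forall>j<m. \<forall>t\<in>{0..1}. 0 \<le> tau i j t \<and> tau i j t \<le> 1) \<and>
     (\<forall>i<n. \<forall>j<m. tau i j integrable_on {0..1}) \<and>
     (\<forall>i<n. (\<Sum>j<m. dist (a j) (b j) * integral {0..1} (tau i j)) = w i) \<and>
     (\<forall>j<m. \<forall>t\<in>{0..1}. (\<Sum>i<n. tau i j t) = 1)"

definition plan_cost :: "nat \<Rightarrow> nat \<Rightarrow> (nat \<Rightarrow> real^2) \<Rightarrow> (nat \<Rightarrow> real^2) \<Rightarrow> (nat \<Rightarrow> real^2)
    \<Rightarrow> (nat \<Rightarrow> nat \<Rightarrow> real \<Rightarrow> real) \<Rightarrow> real" where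
  "plan_cost n m p a b tau =
     (\<Sum>i<n. \<Sum>j<m. dist (a j) (b j) *
        integral {0..1} (\<lambda>t. tau i j t * dist (p i) (seg a b j t)))"

definition emd :: "nat \<Rightarrow> nat \<Rightarrow> (nat \<Rightarrow> real^2) \<Rightarrow> (nat \<Rightarrow> real) \<Rightarrow> (nat \<Rightarrow> real^2)
    \<Rightarrow> (nat \<Rightarrow> real^2) \<Rightarrow> real" where
  "emd n m p w a b = Inf {plan_cost n m p a b tau | tau. is_plan n m w a b tau}"

text \<open>Dyadic subsegments: (j,d,k) with k < 2^d is the piece of segment j with parameters
  in [k/2^d, (k+1)/2^d]; these are exactly the subsegments arising from repeated halving.\<close>
definition sub_lo :: "nat \<Rightarrow> nat \<Rightarrow> real" where
  "sub_lo d k = real k / 2 ^ d"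
definition sub_hi :: "nat \<Rightarrow> nat \<Rightarrow> real" where
  "sub_hi d k = real (Suc k) / 2 ^ d"

definition subseg :: "(nat \<Rightarrow> real^2) \<Rightarrow> (nat \<Rightarrow> real^2) \<Rightarrow> nat \<times> nat \<times> nat \<Rightarrow> (real^2) set" where
  "subseg a b q = (case q of (j, d, k) \<Rightarrow>
      closed_segment (seg a b j (sub_lo d k)) (seg a b j (sub_hi d k)))"

definition sub_len :: "(nat \<Rightarrow> real^2) \<Rightarrow> (nat \<Rightarrow> real^2) \<Rightarrow> nat \<times> nat \<times> nat \<Rightarrow> real" where
  "sub_len a b q = (case q of (j, d, k) \<Rightarrow>
      dist (seg a b j (sub_lo d k)) (seg a b j (sub_hi d k)))"

text \<open>A subsegment is left alone (not cut) iff some point of P has all of it within distance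
  delta/(nm), or no point of P has ratio largest/smallest distance exceeding 1+delta
  (ratio condition written multiplicatively: max > (1+delta) * min).\<close>
definition stops :: "nat \<Rightarrow> nat \<Rightarrow> (nat \<Rightarrow> real^2) \<Rightarrow> (nat \<Rightarrow> real^2) \<Rightarrow> (nat \<Rightarrow> real^2)
    \<Rightarrow> real \<Rightarrow> nat \<times> nat \<times> nat \<Rightarrow> bool" where
  "stops n m p a b \<delta> q \<longleftrightarrow>
     (\<exists>i<n. \<forall>x\<in>subseg a b q. dist (p i) x \<le> \<delta> / (real n * real m)) \<or>
     \<not> (\<exists>i<n. Sup ((\<lambda>x. dist (p i) x) ` subseg a b q)
                > (1 + \<delta>) * Inf ((\<lambda>x. dist (p i) x) ` subseg a b q))"

text \<open>The resulting subdivision Q: dyadic pieces that stop while all their dyadic ancestors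
  were cut.\<close>
definition Qset :: "nat \<Rightarrow> nat \<Rightarrow> (nat \<Rightarrow> real^2) \<Rightarrow> (nat \<Rightarrow> real^2) \<Rightarrow> (nat \<Rightarrow> real^2)
    \<Rightarrow> real \<Rightarrow> (nat \<times> nat \<times> nat) set" where
  "Qset n m p a b \<delta> = {(j, d, k). j < m \<and> k < 2 ^ d \<and> stops n m p a b \<delta> (j, d, k) \<and>
       (\<forall>d'<d. \<not> stops n m p a b \<delta> (j, d', k div 2 ^ (d - d')))}"

definition is_dplan :: "nat \<Rightarrow> (nat \<Rightarrow> real) \<Rightarrow> (nat \<times> nat \<times> nat) set
    \<Rightarrow> (nat \<times> nat \<times> nat \<Rightarrow> real) \<Rightarrow> (nat \<Rightarrow> nat \<times> nat \<times> nat \<Rightarrow> real) \<Rightarrow> bool" where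
  "is_dplan n w Q wt \<nu> \<longleftrightarrow>
     (\<forall>i<n. \<forall>q\<in>Q. 0 \<le> \<nu> i q) \<and>
     (\<forall>i<n. (\<Sum>q\<in>Q. \<nu> i q) = w i) \<and>
     (\<forall>q\<in>Q. (\<Sum>i<n. \<nu> i q) = wt q)"

definition dplan_cost :: "nat \<Rightarrow> (nat \<Rightarrow> real^2) \<Rightarrow> (nat \<times> nat \<times> nat) set
    \<Rightarrow> (nat \<times> nat \<times> nat \<Rightarrow> real^2) \<Rightarrow> (nat \<Rightarrow> nat \<times> nat \<times> nat \<Rightarrow> real) \<Rightarrow> real" where
  "dplan_cost n p Q t \<nu> = (\<Sum>i<n. \<Sum>q\<in>Q. \<nu> i q * dist (p i) (t q))"

text \<open>Step (4): spread the mass nu i q uniformly (w.r.t. length) over the subsegment q.\<close>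
definition spread :: "(nat \<Rightarrow> real^2) \<Rightarrow> (nat \<Rightarrow> real^2) \<Rightarrow> (nat \<times> nat \<times> nat) set
    \<Rightarrow> (nat \<Rightarrow> nat \<times> nat \<times> nat \<Rightarrow> real) \<Rightarrow> nat \<Rightarrow> nat \<Rightarrow> real \<Rightarrow> real" where
  "spread a b Q \<nu> i j t =
     (\<Sum>(d, k) \<in> {(d, k). (j, d, k) \<in> Q \<and> sub_lo d k \<le> t \<and> t < sub_hi d k}.
        \<nu> i (j, d, k) / sub_len a b (j, d, k))"

end

theory Submission
  imports Defs
begin


lemma seg_diff: "seg a b j s - seg a b j s' = (s - s') *\<^sub>R (b j - a j)"
  by (simp add: seg_def algebra_simps)

lemma dist_seg: "dist (seg a b j s) (seg a b j s') = \<bar>s - s'\<bar> * dist (a j) (b j)"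
  by (simp add: dist_norm seg_diff dist_commute norm_minus_commute)

lemma lo_le_hi: "sub_lo d k \<le> sub_hi d k"
  by (simp add: sub_lo_def sub_hi_def divide_right_mono)

lemma hi_minus_lo: "sub_hi d k - sub_lo d k = 1 / 2 ^ d"
  by (simp add: sub_lo_def sub_hi_def diff_divide_distrib[symmetric])

lemma lo_ge0: "0 \<le> sub_lo d k" by (simp add: sub_lo_def)

lemma hi_le1: "k < 2 ^ d \<Longrightarrow> sub_hi d k \<le> 1"
proof -
  assume "k < 2 ^ d"
  then have "real (Suc k) \<le> 2 ^ d" by (metis Suc_leI of_nat_le_iff of_nat_numeral of_nat_power)
  then show ?thesis by (simp add: sub_hi_def)
qed

lemma seg_image: "lo \<le> hi \<Longrightarrow> closed_segment (seg a b j lo) (seg a b j hi) = seg a b j ` {lo..hi}"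
proof -
  assume "lo \<le> hi"
  have lin: "linear (\<lambda>s::real. s *\<^sub>R (b j - a j))"
    by (simp add: linear_scaleR_left)
  have "closed_segment (seg a b j lo) (seg a b j hi)
      = (\<lambda>x. a j + x) ` closed_segment (lo *\<^sub>R (b j - a j)) (hi *\<^sub>R (b j - a j))"
    unfolding seg_def by (rule closed_segment_translation)
  also have "closed_segment (lo *\<^sub>R (b j - a j)) (hi *\<^sub>R (b j - a j)) = (\<lambda>s::real. s *\<^sub>R (b j - a j)) ` closed_segment lo hi"
    using closed_segment_linear_image[OF lin] by blast
  also have "closed_segment lo hi = {lo..hi}" using \<open>lo \<le> hi\<close> by (simp add: closed_segment_eq_real_ivl)
  finally show ?thesis by (auto simp: seg_def image_image)
qed

lemma subseg_eq: "subseg a b (j,d,k) = seg a b j ` {sub_lo d k..sub_hi d k}"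
  by (simp add: subseg_def seg_image lo_le_hi)

lemma sub_len_eq: "sub_len a b (j,d,k) = dist (a j) (b j) / 2 ^ d"
  using hi_minus_lo[of d k] lo_le_hi[of d k] by (simp add: sub_len_def dist_seg)



lemma in_dy_iff: "(sub_lo d k \<le> s \<and> s < sub_hi d k) \<longleftrightarrow> (real k \<le> s * 2^d \<and> s * 2^d < real k + 1)"
  by (simp add: sub_lo_def sub_hi_def divide_le_eq less_divide_eq add.commute)

lemma dy_unique: "sub_lo d k \<le> s \<Longrightarrow> s < sub_hi d k \<Longrightarrow> sub_lo d k' \<le> s \<Longrightarrow> s < sub_hi d k' \<Longrightarrow> k = k'"
proof -
  assume "sub_lo d k \<le> s" "s < sub_hi d k" "sub_lo d k' \<le> s" "s < sub_hi d k'"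
  then have "real k \<le> s * 2^d" "s * 2^d < real k + 1" "real k' \<le> s * 2^d" "s * 2^d < real k' + 1"
    using in_dy_iff[of d k s] in_dy_iff[of d k' s] by blast+
  then have "real k < real k' + 1" "real k' < real k + 1" by linarith+
  then show "k = k'" by linarith
qed

lemma dy_anc:
  assumes "sub_lo d k \<le> s" "s < sub_hi d k" "d' \<le> d"
  shows "sub_lo d' (k div 2^(d-d')) \<le> s \<and> s < sub_hi d' (k div 2^(d-d'))"
proof -
  define N :: nat where "N = 2^(d-d')"
  have N: "(2::real)^d = 2^d' * real N" using assms(3) by (simp add: N_def power_add[symmetric])
  have Npos: "N > 0" by (simp add: N_def)
  have h: "real k \<le> s * 2^d" "s * 2^d < real k + 1" using assms in_dy_iff by blast+
  have a1: "k div N * N \<le> k" by simp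
  have a2: "k + 1 \<le> (k div N + 1) * N"
  proof -
    have "k mod N < N" using Npos by simp
    then have "k + 1 \<le> k div N * N + N" using div_mult_mod_eq[of k N] by linarith
    then show ?thesis by (simp add: algebra_simps)
  qed
  have b1: "real (k div N) * real N \<le> s * 2^d' * real N"
    using h(1) a1 N by (metis mult.assoc mult.commute of_nat_le_iff of_nat_mult order_trans)
  have b2: "s * 2^d' * real N < (real (k div N) + 1) * real N"
  proof -
    have "real k + 1 \<le> (real (k div N) + 1) * real N"
      using a2 by (metis of_nat_1 of_nat_add of_nat_le_iff of_nat_mult)
    moreover have "s * 2^d' * real N = s * 2^d" using N by simp
    ultimately show ?thesis using h(2) by linarith
  qed
  have "real (k div N) \<le> s * 2^d'" using b1 Npos by simp
  moreover have "s * 2^d' < real (k div N) + 1" using b2 Npos by simp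
  ultimately show ?thesis using in_dy_iff N_def by blast
qed

lemma dy_exists:
  assumes "0 \<le> s" "s < 1"
  shows "sub_lo d (nat \<lfloor>s * 2^d\<rfloor>) \<le> s \<and> s < sub_hi d (nat \<lfloor>s * 2^d\<rfloor>) \<and> nat \<lfloor>s * 2^d\<rfloor> < 2^d"
proof -
  have nn: "0 \<le> s * 2^d" using assms by simp
  have r: "real (nat \<lfloor>s * 2^d\<rfloor>) = of_int \<lfloor>s * 2^d\<rfloor>" using nn by simp
  have "real (nat \<lfloor>s * 2^d\<rfloor>) \<le> s * 2^d" "s * 2^d < real (nat \<lfloor>s * 2^d\<rfloor>) + 1"
    using r by linarith+
  moreover have "real (nat \<lfloor>s * 2^d\<rfloor>) < 2^d"
  proof -
    have "s * 2^d < 1 * 2^d" using assms by (intro mult_strict_right_mono) auto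
    then show ?thesis using r of_int_floor_le[of "s*2^d"] by linarith
  qed
  ultimately show ?thesis using in_dy_iff
    by (metis of_nat_less_iff of_nat_numeral of_nat_power)
qed



lemma subseg_near:
  assumes "sub_lo d k \<le> s" "s < sub_hi d k" "x \<in> subseg a b (j,d,k)"
  shows "dist (seg a b j s) x \<le> dist (a j) (b j) / 2^d"
proof -
  obtain s' where s': "s' \<in> {sub_lo d k..sub_hi d k}" "x = seg a b j s'" using assms(3) subseg_eq by auto
  have "\<bar>s - s'\<bar> \<le> 1/2^d" using s' assms hi_minus_lo[of d k] by auto
  then have "\<bar>s - s'\<bar> * dist (a j) (b j) \<le> 1/2^d * dist (a j) (b j)" 
    using mult_right_mono zero_le_dist by blast
  then show ?thesis using s' by (simp add: dist_seg)
qed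

lemma pow2_small: "0 < (e::real) \<Longrightarrow> \<exists>d::nat. L / 2^d \<le> e"
proof -
  assume "0 < e"
  obtain d::nat where "L / e < 2^d" using real_arch_pow[of 2 "L/e"] by auto
  then have "L < e * 2^d" using \<open>0<e\<close> by (simp add: divide_less_eq mult.commute)
  then show ?thesis using \<open>0<e\<close> by (intro exI[of _ d]) (simp add: divide_le_eq mult.commute)
qed

lemma subseg_ne: "subseg a b (j,d,k) \<noteq> {}" using lo_le_hi by (simp add: subseg_eq)

lemma stops_at:
  assumes "0 < \<delta>" "\<delta> \<le> 1" "0 < n" "0 < m" "0 \<le> (s::real)" "s < 1"
  shows "\<exists>d. stops n m p a b \<delta> (j, d, nat \<lfloor>s * 2^d\<rfloor>)"
proof (cases "\<exists>i<n. p i = seg a b j s")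
  case True
  then obtain i where i: "i < n" "p i = seg a b j s" by auto
  have e: "0 < \<delta> / (real n * real m)" using assms by simp
  obtain d where d: "dist (a j) (b j) / 2^d \<le> \<delta> / (real n * real m)" using pow2_small[OF e] by blast
  have dy: "sub_lo d (nat \<lfloor>s * 2^d\<rfloor>) \<le> s" "s < sub_hi d (nat \<lfloor>s * 2^d\<rfloor>)"
    using dy_exists[OF assms(5,6), of d] by auto
  have "\<forall>x\<in>subseg a b (j, d, nat \<lfloor>s * 2^d\<rfloor>). dist (p i) x \<le> \<delta> / (real n * real m)"
  proof
    fix x assume "x \<in> subseg a b (j, d, nat \<lfloor>s * 2^d\<rfloor>)"
    from subseg_near[OF dy this] d i(2) show "dist (p i) x \<le> \<delta> / (real n * real m)" by simp
  qed
  then show ?thesis using i unfolding stops_def by blast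
next
  case False
  define D where "D = Min ((\<lambda>i. dist (p i) (seg a b j s)) ` {..<n})"
  have Dpos: "0 < D" unfolding D_def using False assms(3) by (subst Min_gr_iff) auto
  have Dle: "\<And>i. i < n \<Longrightarrow> D \<le> dist (p i) (seg a b j s)" unfolding D_def by auto
  have e: "0 < \<delta> * D / 3" using assms Dpos by simp
  obtain d where d: "dist (a j) (b j) / 2^d \<le> \<delta> * D / 3" using pow2_small[OF e] by blast
  define q where "q = (j, d, nat \<lfloor>s * 2^d\<rfloor>)"
  define \<epsilon> where "\<epsilon> = dist (a j) (b j) / 2^d"
  have near: "\<And>x. x \<in> subseg a b q \<Longrightarrow> dist (seg a b j s) x \<le> \<epsilon>"
  proof -
    fix x assume x: "x \<in> subseg a b q"
    have dy: "sub_lo d (nat \<lfloor>s * 2^d\<rfloor>) \<le> s" "s < sub_hi d (nat \<lfloor>s * 2^d\<rfloor>)"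
      using dy_exists[OF assms(5,6), of d] by auto
    show "dist (seg a b j s) x \<le> \<epsilon>" using subseg_near[OF dy] x unfolding q_def \<epsilon>_def by blast
  qed
  have "\<not> (Sup ((\<lambda>x. dist (p i) x) ` subseg a b q) > (1 + \<delta>) * Inf ((\<lambda>x. dist (p i) x) ` subseg a b q))"
    if i: "i < n" for i
  proof -
    define di where "di = dist (p i) (seg a b j s)"
    have ne: "(\<lambda>x. dist (p i) x) ` subseg a b q \<noteq> {}" using subseg_ne q_def by simp
    have "Sup ((\<lambda>x. dist (p i) x) ` subseg a b q) \<le> di + \<epsilon>"
    proof (rule cSup_least[OF ne])
      fix y assume "y \<in> (\<lambda>x. dist (p i) x) ` subseg a b q"
      then obtain x where x: "x \<in> subseg a b q" "y = dist (p i) x" by auto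
      show "y \<le> di + \<epsilon>" using near[OF x(1)] x(2) dist_triangle[of "p i" x "seg a b j s"] di_def
        by (simp add: dist_commute)
    qed
    moreover have "di - \<epsilon> \<le> Inf ((\<lambda>x. dist (p i) x) ` subseg a b q)"
    proof (rule cInf_greatest[OF ne])
      fix y assume "y \<in> (\<lambda>x. dist (p i) x) ` subseg a b q"
      then obtain x where x: "x \<in> subseg a b q" "y = dist (p i) x" by auto
      show "di - \<epsilon> \<le> y" using near[OF x(1)] x(2) dist_triangle[of "p i" "seg a b j s" x] di_def
        by (simp add: dist_commute)
    qed
    moreover have "di + \<epsilon> \<le> (1 + \<delta>) * (di - \<epsilon>)"
    proof -
      have "\<epsilon> \<le> \<delta> * D / 3" using d \<epsilon>_def by simp
      moreover have "\<delta> * D \<le> \<delta> * di" using Dle[OF i] di_def assms(1) by simp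
      moreover have "0 \<le> \<epsilon>" unfolding \<epsilon>_def by simp
      moreover have "\<delta> * \<epsilon> \<le> \<epsilon>" using \<open>0 \<le> \<epsilon>\<close> assms(2) mult_right_mono[of \<delta> 1 \<epsilon>] by simp
      ultimately show ?thesis by (simp add: algebra_simps)
    qed
    moreover have "0 \<le> 1 + \<delta>" using assms by simp
    ultimately have "Sup ((\<lambda>x. dist (p i) x) ` subseg a b q) \<le> (1 + \<delta>) * Inf ((\<lambda>x. dist (p i) x) ` subseg a b q)"
      using mult_left_mono[of "di - \<epsilon>" "Inf ((\<lambda>x. dist (p i) x) ` subseg a b q)" "1 + \<delta>"] by linarith
    then show ?thesis by linarith
  qed
  then show ?thesis unfolding stops_def q_def by blast
qed



lemma Q_unique_aux:
  assumes "(j,d,k) \<in> Qset n m p a b \<delta>" "(j,d',k') \<in> Qset n m p a b \<delta>"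
    "sub_lo d k \<le> s" "s < sub_hi d k" "sub_lo d' k' \<le> s" "s < sub_hi d' k'" "d' < d"
  shows False
proof -
  have "sub_lo d' (k div 2^(d-d')) \<le> s \<and> s < sub_hi d' (k div 2^(d-d'))"
    using dy_anc[OF assms(3,4)] assms(7) by simp
  then have "k div 2^(d-d') = k'" using dy_unique assms(5,6) by blast
  moreover have "\<not> stops n m p a b \<delta> (j, d', k div 2^(d-d'))" using assms(1,7) unfolding Qset_def by auto
  moreover have "stops n m p a b \<delta> (j, d', k')" using assms(2) unfolding Qset_def by auto
  ultimately show False by simp
qed

lemma Q_unique:
  assumes "(j,d,k) \<in> Qset n m p a b \<delta>" "(j,d',k') \<in> Qset n m p a b \<delta>"
    "sub_lo d k \<le> s" "s < sub_hi d k" "sub_lo d' k' \<le> s" "s < sub_hi d' k'"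
  shows "d = d' \<and> k = k'"
proof -
  have "d = d'" using Q_unique_aux[OF assms] Q_unique_aux[OF assms(2,1,5,6,3,4)] by (meson linorder_neqE_nat)
  then show ?thesis using dy_unique assms(3-6) by blast
qed

lemma Q_exists:
  assumes "0 < \<delta>" "\<delta> \<le> 1" "0 < n" "j < m" "0 \<le> (s::real)" "s < 1"
  shows "\<exists>d k. (j,d,k) \<in> Qset n m p a b \<delta> \<and> sub_lo d k \<le> s \<and> s < sub_hi d k"
proof -
  have m: "0 < m" using assms by simp
  define kd where "kd = (\<lambda>d::nat. nat \<lfloor>s * 2^d\<rfloor>)"
  have ex: "\<exists>d. stops n m p a b \<delta> (j, d, kd d)" using stops_at[OF assms(1,2,3) m assms(5,6)] kd_def by simp
  define d0 where "d0 = (LEAST d. stops n m p a b \<delta> (j, d, kd d))"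
  have st: "stops n m p a b \<delta> (j, d0, kd d0)" unfolding d0_def using LeastI_ex[OF ex] .
  have dy: "sub_lo d0 (kd d0) \<le> s" "s < sub_hi d0 (kd d0)" "kd d0 < 2^d0" using dy_exists[OF assms(5,6)] kd_def by auto
  have "\<not> stops n m p a b \<delta> (j, d', kd d0 div 2 ^ (d0 - d'))" if "d' < d0" for d'
  proof -
    have "sub_lo d' (kd d0 div 2^(d0-d')) \<le> s \<and> s < sub_hi d' (kd d0 div 2^(d0-d'))"
      using dy_anc[OF dy(1,2)] that by simp
    moreover have "sub_lo d' (kd d') \<le> s \<and> s < sub_hi d' (kd d')" using dy_exists[OF assms(5,6)] kd_def by auto
    ultimately have "kd d0 div 2^(d0-d') = kd d'" using dy_unique by blast
    moreover have "\<not> stops n m p a b \<delta> (j, d', kd d')" using not_less_Least[of d' "\<lambda>d. stops n m p a b \<delta> (j, d, kd d)"] that d0_def by blast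
    ultimately show ?thesis by simp
  qed
  then have "(j, d0, kd d0) \<in> Qset n m p a b \<delta>" unfolding Qset_def using assms(4) st dy(3) by auto
  then show ?thesis using dy by blast
qed



lemma has_integral_Ico:
  fixes f :: "real \<Rightarrow> real"
  assumes "(f has_integral y) {lo..hi}"
  shows "(f has_integral y) {lo..<hi}"
proof -
  have "negligible {x \<in> {lo..hi} - {lo..<hi}. f x \<noteq> 0}"
    by (rule negligible_subset[of "{hi}"]) auto
  moreover have "{x \<in> {lo..<hi} - {lo..hi}. f x \<noteq> 0} = {}" by auto
  then have "negligible {x \<in> {lo..<hi} - {lo..hi}. f x \<noteq> 0}" by (metis negligible_empty)
  ultimately show ?thesis using has_integral_spike_set_eq assms by blast
qed

lemma G1:
  fixes g :: "real \<Rightarrow> real"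
  assumes "k < 2^d" "g integrable_on {0..1}"
  shows "((\<lambda>s. if sub_lo d k \<le> s \<and> s < sub_hi d k then c * g s else 0)
            has_integral (c * integral {sub_lo d k..sub_hi d k} g)) {0..1}"
proof -
  have sub: "{sub_lo d k..sub_hi d k} \<subseteq> {0..1}" using lo_ge0 hi_le1[OF assms(1)] by auto
  have "g integrable_on {sub_lo d k..sub_hi d k}" using integrable_on_subinterval[OF assms(2) sub] .
  then have "((\<lambda>s. c * g s) has_integral (c * integral {sub_lo d k..sub_hi d k} g)) {sub_lo d k..sub_hi d k}"
    using has_integral_mult_right integrable_integral by blast
  then have "((\<lambda>s. c * g s) has_integral (c * integral {sub_lo d k..sub_hi d k} g)) ({sub_lo d k..<sub_hi d k} \<inter> {0..1})"
    using has_integral_Ico sub by (simp add: Int_absorb2 subset_eq)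
  then have "((\<lambda>s. if s \<in> {sub_lo d k..<sub_hi d k} then c * g s else 0)
            has_integral (c * integral {sub_lo d k..sub_hi d k} g)) {0..1}"
    by (subst has_integral_restrict_Int)
  then show ?thesis by simp
qed

lemma G:
  fixes g :: "real \<Rightarrow> real"
  assumes "finite A" "\<forall>(d,k)\<in>A. k < 2^d" "g integrable_on {0..1}"
  shows "((\<lambda>s. \<Sum>(d,k)\<in>A. if sub_lo d k \<le> s \<and> s < sub_hi d k then c d k * g s else 0)
            has_integral (\<Sum>(d,k)\<in>A. c d k * integral {sub_lo d k..sub_hi d k} g)) {0..1}"
proof -
  have "((\<lambda>s. \<Sum>q\<in>A. (\<lambda>q s. if sub_lo (fst q) (snd q) \<le> s \<and> s < sub_hi (fst q) (snd q)
       then c (fst q) (snd q) * g s else 0) q s)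
     has_integral (\<Sum>q\<in>A. c (fst q) (snd q) * integral {sub_lo (fst q) (snd q)..sub_hi (fst q) (snd q)} g)) {0..1}"
  proof (rule has_integral_sum[OF assms(1)])
    fix q assume "q \<in> A"
    then have "snd q < 2 ^ fst q" using assms(2) by auto
    from G1[OF this assms(3)] show "((\<lambda>s. if sub_lo (fst q) (snd q) \<le> s \<and> s < sub_hi (fst q) (snd q)
       then c (fst q) (snd q) * g s else 0) has_integral (c (fst q) (snd q) * integral {sub_lo (fst q) (snd q)..sub_hi (fst q) (snd q)} g)) {0..1}" .
  qed
  then show ?thesis by (simp add: case_prod_beta')
qed



locale tsetup =
  fixes n m :: nat and p :: "nat \<Rightarrow> real^2" and w :: "nat \<Rightarrow> real"
    and a b :: "nat \<Rightarrow> real^2" and \<delta> :: real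
    and t :: "nat \<times> nat \<times> nat \<Rightarrow> real^2"
    and \<nu> :: "nat \<Rightarrow> nat \<times> nat \<times> nat \<Rightarrow> real"
  assumes w_pos: "\<forall>i<n. 0 < w i"
    and w_total: "(\<Sum>i<n. w i) = 1"
    and len_total: "(\<Sum>j<m. dist (a j) (b j)) = 1"
    and delta: "0 < \<delta>" "\<delta> \<le> 1/4"
    and t_on: "\<forall>q\<in>Qset n m p a b \<delta>. t q \<in> subseg a b q"
    and nu_plan: "is_dplan n w (Qset n m p a b \<delta>) (sub_len a b) \<nu>"
    and nu_opt: "\<forall>\<nu>'. is_dplan n w (Qset n m p a b \<delta>) (sub_len a b) \<nu>' \<longrightarrow>
                   dplan_cost n p (Qset n m p a b \<delta>) t \<nu> \<le> dplan_cost n p (Qset n m p a b \<delta>) t \<nu>'"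
begin

abbreviation "Q \<equiv> Qset n m p a b \<delta>"
abbreviation "L j \<equiv> dist (a j) (b j)"
definition "Qj j = {(d,k). (j,d,k) \<in> Q}"
definition "r = \<delta> / (real n * real m)"
definition "close q \<longleftrightarrow> (\<exists>i<n. \<forall>x\<in>subseg a b q. dist (p i) x \<le> r)"
definition "e q = (if close q then sub_len a b q else 0)"

lemma n_pos: "0 < n"
  using w_total by (cases n) auto

lemma m_pos: "0 < m"
  using len_total by (cases m) auto

lemma r_pos: "0 < r" unfolding r_def using n_pos m_pos delta by simp

lemma Q_fin: "finite Q"
proof (rule ccontr)
  assume "infinite Q"
  then have "(\<Sum>q\<in>Q. \<nu> 0 q) = 0" by simp
  moreover have "(\<Sum>q\<in>Q. \<nu> 0 q) = w 0" using nu_plan n_pos unfolding is_dplan_def by blast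
  moreover have "0 < w 0" using w_pos n_pos by blast
  ultimately show False by simp
qed

lemma Qj_fin: "finite (Qj j)"
proof -
  have "Qj j \<subseteq> snd ` Q" unfolding Qj_def by force
  then show ?thesis using Q_fin finite_subset by blast
qed

lemma Qj_k: "(d,k) \<in> Qj j \<Longrightarrow> k < 2^d" unfolding Qj_def Qset_def by auto
lemma Qj_k': "\<forall>(d,k)\<in>Qj j. k < 2^d" using Qj_k by auto
lemma Q_j: "(j,d,k) \<in> Q \<Longrightarrow> j < m" unfolding Qset_def by auto

lemma Q_Sigma: "Q = (SIGMA j:{..<m}. Qj j)"
  unfolding Qj_def using Q_j by auto

lemma sum_Q: "(\<Sum>q\<in>Q. f q) = (\<Sum>j<m. \<Sum>(d,k)\<in>Qj j. f (j,d,k))"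
proof -
  have "(\<Sum>j<m. \<Sum>(d,k)\<in>Qj j. f (j,d,k)) = (\<Sum>j<m. \<Sum>dk\<in>Qj j. f (j,dk))"
    by (simp add: case_prod_beta')
  also have "\<dots> = (\<Sum>(j,dk)\<in>(SIGMA j:{..<m}. Qj j). f (j,dk))"
    using Qj_fin by (subst sum.Sigma) auto
  finally show ?thesis using Q_Sigma by (simp add: case_prod_beta')
qed

lemma at_most_one:
  assumes "A \<subseteq> Qj j"
  shows "(\<Sum>(d,k)\<in>A. if sub_lo d k \<le> s \<and> s < sub_hi d k then 1 else 0) \<le> (1::real)"
proof -
  have fin: "finite A" using assms Qj_fin finite_subset by blast
  have "(\<Sum>(d,k)\<in>A. if sub_lo d k \<le> s \<and> s < sub_hi d k then 1 else (0::real))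
      = (\<Sum>dk\<in>{dk\<in>A. sub_lo (fst dk) (snd dk) \<le> s \<and> s < sub_hi (fst dk) (snd dk)}. 1)"
    using fin by (simp add: sum.inter_filter[symmetric] case_prod_beta')
  also have "\<dots> = real (card {dk\<in>A. sub_lo (fst dk) (snd dk) \<le> s \<and> s < sub_hi (fst dk) (snd dk)})" by simp
  also have "\<dots> \<le> 1"
  proof -
    have "card {dk\<in>A. sub_lo (fst dk) (snd dk) \<le> s \<and> s < sub_hi (fst dk) (snd dk)} \<le> 1"
    proof -
      have fin2: "finite {dk\<in>A. sub_lo (fst dk) (snd dk) \<le> s \<and> s < sub_hi (fst dk) (snd dk)}" using fin by simp
      have "\<forall>x\<in>{dk\<in>A. sub_lo (fst dk) (snd dk) \<le> s \<and> s < sub_hi (fst dk) (snd dk)}.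
          \<forall>y\<in>{dk\<in>A. sub_lo (fst dk) (snd dk) \<le> s \<and> s < sub_hi (fst dk) (snd dk)}. x = y"
      proof (intro ballI)
        fix x y assume x: "x \<in> {dk\<in>A. sub_lo (fst dk) (snd dk) \<le> s \<and> s < sub_hi (fst dk) (snd dk)}"
          and y: "y \<in> {dk\<in>A. sub_lo (fst dk) (snd dk) \<le> s \<and> s < sub_hi (fst dk) (snd dk)}"
        have "(j, fst x, snd x) \<in> Q" "(j, fst y, snd y) \<in> Q" using x y assms unfolding Qj_def by auto
        then show "x = y" using Q_unique[of j "fst x" "snd x" n m p a b \<delta> "fst y" "snd y" s] x y
          by (simp add: prod_eq_iff)
      qed
      then show ?thesis using card_le_Suc0_iff_eq[OF fin2] by simp
    qed
    then show ?thesis by simp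
  qed
  finally show ?thesis .
qed

lemma exactly_one:
  assumes "j < m" "0 \<le> s" "s < 1"
  shows "(\<Sum>(d,k)\<in>Qj j. if sub_lo d k \<le> s \<and> s < sub_hi d k then c * f s else 0) = (c * f s :: real)"
proof -
  obtain d0 k0 where q0: "(j,d0,k0) \<in> Q" "sub_lo d0 k0 \<le> s" "s < sub_hi d0 k0"
    using Q_exists[OF delta(1) _ n_pos assms] delta(2) by force
  have "{dk\<in>Qj j. sub_lo (fst dk) (snd dk) \<le> s \<and> s < sub_hi (fst dk) (snd dk)} = {(d0,k0)}"
    using q0 Q_unique unfolding Qj_def by (auto simp: prod_eq_iff)
  then have "(\<Sum>dk\<in>Qj j. if sub_lo (fst dk) (snd dk) \<le> s \<and> s < sub_hi (fst dk) (snd dk) then c * f s else 0)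
       = c * f s"
    using Qj_fin by (simp add: sum.inter_filter[symmetric])
  then show ?thesis by (simp add: case_prod_beta')
qed

lemma partition:
  fixes f :: "real \<Rightarrow> real"
  assumes "j < m" "f integrable_on {0..1}"
  shows "integral {0..1} f = (\<Sum>(d,k)\<in>Qj j. integral {sub_lo d k..sub_hi d k} f)"
proof -
  have h: "((\<lambda>s. \<Sum>(d,k)\<in>Qj j. if sub_lo d k \<le> s \<and> s < sub_hi d k then 1 * f s else 0)
            has_integral (\<Sum>(d,k)\<in>Qj j. 1 * integral {sub_lo d k..sub_hi d k} f)) {0..1}"
    using G[OF Qj_fin Qj_k' assms(2), of "\<lambda>_ _. 1"] by simp
  have "(f has_integral (\<Sum>(d,k)\<in>Qj j. 1 * integral {sub_lo d k..sub_hi d k} f)) {0..1}"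
  proof (rule has_integral_spike[OF _ _ h])
    show "negligible {1::real}" by simp
    fix s assume "s \<in> {0..1::real} - {1}"
    then show "f s = (\<Sum>(d,k)\<in>Qj j. if sub_lo d k \<le> s \<and> s < sub_hi d k then 1 * f s else 0)"
      using exactly_one[OF assms(1), of s 1 f] by auto
  qed
  then show ?thesis by (simp add: integral_unique)
qed

end


lemma subseg_diam:
  assumes "x \<in> subseg a b (j,d,k)" "y \<in> subseg a b (j,d,k)"
  shows "dist x y \<le> sub_len a b (j,d,k)"
proof -
  obtain s1 where s1: "s1 \<in> {sub_lo d k..sub_hi d k}" "x = seg a b j s1" using assms(1) subseg_eq by auto
  obtain s2 where s2: "s2 \<in> {sub_lo d k..sub_hi d k}" "y = seg a b j s2" using assms(2) subseg_eq by auto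
  have "\<bar>s1 - s2\<bar> \<le> 1/2^d" using s1 s2 hi_minus_lo[of d k] by auto
  then have "\<bar>s1 - s2\<bar> * dist (a j) (b j) \<le> 1/2^d * dist (a j) (b j)"
    using mult_right_mono zero_le_dist by blast
  then show ?thesis using s1 s2 by (simp add: dist_seg sub_len_eq)
qed

context tsetup begin

lemma PW:
  assumes q: "(j,d,k) \<in> Q" and i: "i < n" and x: "x \<in> subseg a b (j,d,k)" and y: "y \<in> subseg a b (j,d,k)"
  shows "dist (p i) x \<le> (1 + \<delta>) * dist (p i) y + e (j,d,k)"
proof (cases "close (j,d,k)")
  case True
  have "dist (p i) x \<le> dist (p i) y + dist y x" by (rule dist_triangle)
  also have "\<dots> \<le> dist (p i) y + sub_len a b (j,d,k)" using subseg_diam[OF y x] by simp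
  also have "\<dots> \<le> (1 + \<delta>) * dist (p i) y + e (j,d,k)"
    using True delta(1) unfolding e_def by (simp add: algebra_simps)
  finally show ?thesis .
next
  case False
  have st: "stops n m p a b \<delta> (j,d,k)" using q unfolding Qset_def by auto
  then have ratio: "\<not> (Sup ((\<lambda>x. dist (p i) x) ` subseg a b (j,d,k)) >
      (1 + \<delta>) * Inf ((\<lambda>x. dist (p i) x) ` subseg a b (j,d,k)))"
    using False i unfolding stops_def close_def r_def by blast
  have bdd: "bdd_above ((\<lambda>x. dist (p i) x) ` subseg a b (j,d,k))"
  proof (rule bdd_aboveI2)
    fix z assume "z \<in> subseg a b (j,d,k)"
    then show "dist (p i) z \<le> dist (p i) y + sub_len a b (j,d,k)"
      using subseg_diam[OF y] dist_triangle[of "p i" z y] by fastforce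
  qed
  have bddb: "bdd_below ((\<lambda>x. dist (p i) x) ` subseg a b (j,d,k))"
    by (rule bdd_belowI2[of _ 0]) simp
  have "dist (p i) x \<le> Sup ((\<lambda>x. dist (p i) x) ` subseg a b (j,d,k))"
    using cSup_upper[OF _ bdd] x by blast
  also have "\<dots> \<le> (1 + \<delta>) * Inf ((\<lambda>x. dist (p i) x) ` subseg a b (j,d,k))" using ratio by linarith
  also have "\<dots> \<le> (1 + \<delta>) * dist (p i) y"
    using cInf_lower[OF _ bddb] y delta(1) by (intro mult_left_mono) auto
  finally show ?thesis unfolding e_def using False by simp
qed

lemma e_nonneg: "0 \<le> e q" unfolding e_def by (cases q) (simp add: sub_len_def)

lemma seg_in: "s \<in> {sub_lo d k..sub_hi d k} \<Longrightarrow> seg a b j s \<in> subseg a b (j,d,k)"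
  using subseg_eq by auto

lemma cont_g: "continuous_on S (\<lambda>s. dist (p i) (seg a b j s))"
  unfolding seg_def by (intro continuous_intros)

lemma int_g: "(\<lambda>s. dist (p i) (seg a b j s)) integrable_on {u..v}"
  using cont_g integrable_continuous_interval by blast

end


context tsetup begin

lemma nu_nonneg: "i < n \<Longrightarrow> q \<in> Q \<Longrightarrow> 0 \<le> \<nu> i q" using nu_plan unfolding is_dplan_def by blast

lemma spread_eq:
  "spread a b Q \<nu> i j s = (\<Sum>(d,k)\<in>Qj j. if sub_lo d k \<le> s \<and> s < sub_hi d k then \<nu> i (j,d,k) / sub_len a b (j,d,k) else 0)"
proof -
  have "{(d, k). (j, d, k) \<in> Q \<and> sub_lo d k \<le> s \<and> s < sub_hi d k} = {dk\<in>Qj j. sub_lo (fst dk) (snd dk) \<le> s \<and> s < sub_hi (fst dk) (snd dk)}"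
    unfolding Qj_def by auto
  then have "spread a b Q \<nu> i j s = (\<Sum>dk\<in>Qj j. if sub_lo (fst dk) (snd dk) \<le> s \<and> s < sub_hi (fst dk) (snd dk)
           then \<nu> i (j, dk) / sub_len a b (j, dk) else 0)" unfolding spread_def using Qj_fin
    by (simp add: sum.inter_filter case_prod_beta')
  then show ?thesis by (auto simp: case_prod_beta' intro!: sum.cong)
qed

lemma spread_int:
  "integral {0..1} (\<lambda>s. spread a b Q \<nu> i j s * dist (p i) (seg a b j s)) =
   (\<Sum>(d,k)\<in>Qj j. \<nu> i (j,d,k) / sub_len a b (j,d,k) * integral {sub_lo d k..sub_hi d k} (\<lambda>s. dist (p i) (seg a b j s)))"
proof -
  have fe: "(\<lambda>s. spread a b Q \<nu> i j s * dist (p i) (seg a b j s)) =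
     (\<lambda>s. \<Sum>(d,k)\<in>Qj j. if sub_lo d k \<le> s \<and> s < sub_hi d k then (\<nu> i (j,d,k) / sub_len a b (j,d,k)) * dist (p i) (seg a b j s) else 0)"
    unfolding spread_eq by (auto simp: sum_distrib_right case_prod_beta' intro!: sum.cong)
  show ?thesis unfolding fe
    by (rule integral_unique[OF G[OF Qj_fin Qj_k' int_g]])
qed

lemma spread_term:
  assumes q: "(j,d,k) \<in> Q" and i: "i < n"
  shows "L j * (\<nu> i (j,d,k) / sub_len a b (j,d,k) * integral {sub_lo d k..sub_hi d k} (\<lambda>s. dist (p i) (seg a b j s)))
     \<le> \<nu> i (j,d,k) * ((1 + \<delta>) * dist (p i) (t (j,d,k)) + e (j,d,k))"
proof -
  define K where "K = (1 + \<delta>) * dist (p i) (t (j,d,k)) + e (j,d,k)"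
  have K0: "0 \<le> K" unfolding K_def using e_nonneg delta by simp
  have nu0: "0 \<le> \<nu> i (j,d,k)" using nu_nonneg[OF i q] .
  have tq: "t (j,d,k) \<in> subseg a b (j,d,k)" using t_on q by blast
  have le: "integral {sub_lo d k..sub_hi d k} (\<lambda>s. dist (p i) (seg a b j s)) \<le> integral {sub_lo d k..sub_hi d k} (\<lambda>s. K)"
    by (rule integral_le[OF int_g]) (auto simp: K_def intro!: PW[OF q i seg_in tq])
  have c: "integral {sub_lo d k..sub_hi d k} (\<lambda>s. K) = K / 2^d"
    using lo_le_hi[of d k] hi_minus_lo[of d k] by simp
  show ?thesis
  proof (cases "L j = 0")
    case True
    then show ?thesis using K0 nu0 K_def by simp
  next
    case False
    then have Lp: "0 < L j" by simp
    have "L j * (\<nu> i (j,d,k) / sub_len a b (j,d,k) * integral {sub_lo d k..sub_hi d k} (\<lambda>s. dist (p i) (seg a b j s)))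
        = \<nu> i (j,d,k) * 2^d * integral {sub_lo d k..sub_hi d k} (\<lambda>s. dist (p i) (seg a b j s))"
      using Lp by (simp add: sub_len_eq)
    also have "\<dots> \<le> \<nu> i (j,d,k) * 2^d * (K / 2^d)" using le c nu0 by (intro mult_left_mono) auto
    also have "\<dots> = \<nu> i (j,d,k) * K" by simp
    finally show ?thesis unfolding K_def .
  qed
qed

lemma spread_side:
  "plan_cost n m p a b (spread a b Q \<nu>) \<le> (1 + \<delta>) * dplan_cost n p Q t \<nu> + (\<Sum>q\<in>Q. e q * sub_len a b q)"
proof -
  have "plan_cost n m p a b (spread a b Q \<nu>) =
    (\<Sum>i<n. \<Sum>j<m. \<Sum>(d,k)\<in>Qj j. L j * (\<nu> i (j,d,k) / sub_len a b (j,d,k) * integral {sub_lo d k..sub_hi d k} (\<lambda>s. dist (p i) (seg a b j s))))"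
    unfolding plan_cost_def spread_int by (simp add: sum_distrib_left case_prod_beta')
  also have "\<dots> \<le> (\<Sum>i<n. \<Sum>j<m. \<Sum>(d,k)\<in>Qj j. \<nu> i (j,d,k) * ((1 + \<delta>) * dist (p i) (t (j,d,k)) + e (j,d,k)))"
    apply (intro sum_mono)
    using spread_term unfolding Qj_def by (auto simp: case_prod_beta')
  also have "\<dots> = (\<Sum>i<n. \<Sum>q\<in>Q. \<nu> i q * ((1 + \<delta>) * dist (p i) (t q) + e q))"
    by (simp add: sum_Q)
  also have "\<dots> = (1 + \<delta>) * (\<Sum>i<n. \<Sum>q\<in>Q. \<nu> i q * dist (p i) (t q)) + (\<Sum>q\<in>Q. e q * (\<Sum>i<n. \<nu> i q))"
    by (simp add: algebra_simps sum.distrib sum_distrib_left sum_distrib_right sum.swap[of _ Q "{..<n}"])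
  also have "\<dots> = (1 + \<delta>) * dplan_cost n p Q t \<nu> + (\<Sum>q\<in>Q. e q * sub_len a b q)"
    using nu_plan unfolding dplan_cost_def is_dplan_def by simp
  finally show ?thesis .
qed

end


locale tplan = tsetup +
  fixes \<tau> :: "nat \<Rightarrow> nat \<Rightarrow> real \<Rightarrow> real"
  assumes plan: "is_plan n m w a b \<tau>"
begin

lemma plan_all:
  "(\<forall>i<n. \<forall>j<m. \<forall>t\<in>{0..1}. 0 \<le> \<tau> i j t \<and> \<tau> i j t \<le> 1) \<and>
  (\<forall>i<n. \<forall>j<m. \<tau> i j integrable_on {0..1}) \<and>
  (\<forall>i<n. (\<Sum>j<m. dist (a j) (b j) * integral {0..1} (\<tau> i j)) = w i) \<and>
  (\<forall>j<m. \<forall>t\<in>{0..1}. (\<Sum>i<n. \<tau> i j t) = 1)"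
  using plan unfolding is_plan_def .
lemmas plan_parts = plan_all[THEN conjunct1] plan_all[THEN conjunct2, THEN conjunct1]
  plan_all[THEN conjunct2, THEN conjunct2, THEN conjunct1] plan_all[THEN conjunct2, THEN conjunct2, THEN conjunct2]

lemma tau01: "i < n \<Longrightarrow> j < m \<Longrightarrow> s \<in> {0..1} \<Longrightarrow> 0 \<le> \<tau> i j s \<and> \<tau> i j s \<le> 1"
  using plan_parts(1) by simp
lemma tau_int: "i < n \<Longrightarrow> j < m \<Longrightarrow> \<tau> i j integrable_on {0..1}"
  using plan_parts(2) by simp
lemma tau_w: "i < n \<Longrightarrow> (\<Sum>j<m. L j * integral {0..1} (\<tau> i j)) = w i"
  using plan_parts(3) by simp
lemma tau_sum: "j < m \<Longrightarrow> s \<in> {0..1} \<Longrightarrow> (\<Sum>i<n. \<tau> i j s) = 1"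
  using plan_parts(4) by simp

lemma tg_int:
  assumes "i < n" "j < m"
  shows "(\<lambda>s. \<tau> i j s * dist (p i) (seg a b j s)) integrable_on {0..1}"
proof -
  have ai: "\<tau> i j absolutely_integrable_on {0..1}"
  proof (rule nonnegative_absolutely_integrable_1[OF tau_int[OF assms]])
    fix x :: real assume "x \<in> {0..1}" then show "0 \<le> \<tau> i j x" using tau01[OF assms] by simp
  qed
  have meas: "(\<lambda>s. dist (p i) (seg a b j s)) \<in> borel_measurable (lebesgue_on {0..1})"
    using continuous_imp_measurable_on_sets_lebesgue[OF cont_g] by simp
  have bd: "bounded ((\<lambda>s. dist (p i) (seg a b j s)) ` {0..1})"
    by (rule compact_imp_bounded[OF compact_continuous_image[OF cont_g]]) simp
  have "(\<lambda>s. dist (p i) (seg a b j s) * \<tau> i j s) absolutely_integrable_on {0..1}"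
    using absolutely_integrable_bounded_measurable_product_real[OF meas _ bd ai] by simp
  then have "(\<lambda>s. dist (p i) (seg a b j s) * \<tau> i j s) integrable_on {0..1}"
    by (rule set_lebesgue_integral_eq_integral(1))
  then show ?thesis by (simp add: mult.commute)
qed

lemma sub_int:
  fixes f :: "real \<Rightarrow> real"
  assumes f: "f integrable_on {0..1}" and k: "k < 2^d"
  shows "f integrable_on {sub_lo d k..sub_hi d k}"
proof -
  have sub: "{sub_lo d k..sub_hi d k} \<subseteq> {0..1}" using lo_ge0[of d k] hi_le1[OF k] by auto
  show ?thesis by (rule integrable_on_subinterval[OF f sub])
qed

lemma sub_in: "k < 2^d \<Longrightarrow> s \<in> {sub_lo d k..sub_hi d k} \<Longrightarrow> s \<in> {0..1::real}"
proof -
  assume "k < 2^d" "s \<in> {sub_lo d k..sub_hi d k}"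
  then show ?thesis using lo_ge0[of d k] hi_le1[of k d] by simp
qed

definition "nu' i q = (case q of (j,d,k) \<Rightarrow> L j * integral {sub_lo d k..sub_hi d k} (\<tau> i j))"

lemma nu'_plan: "is_dplan n w Q (sub_len a b) nu'"
  unfolding is_dplan_def
proof (intro conjI allI impI ballI)
  fix i q assume i: "i < n" and q: "q \<in> Q"
  obtain j d k where qe: "q = (j,d,k)" by (cases q) auto
  have j: "j < m" and k: "k < 2^d" using q qe unfolding Qset_def by auto
  show "0 \<le> nu' i q" unfolding nu'_def qe
    using sub_int[OF tau_int[OF i j] k] tau01[OF i j] sub_in[OF k]
    by (auto intro!: mult_nonneg_nonneg integral_nonneg)
next
  fix i assume i: "i < n"
  have "(\<Sum>q\<in>Q. nu' i q) = (\<Sum>j<m. \<Sum>(d,k)\<in>Qj j. L j * integral {sub_lo d k..sub_hi d k} (\<tau> i j))"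
    by (simp add: sum_Q nu'_def)
  also have "\<dots> = (\<Sum>j<m. L j * integral {0..1} (\<tau> i j))"
    by (intro sum.cong refl) (simp add: partition[OF _ tau_int[OF i]] sum_distrib_left case_prod_beta')
  finally show "(\<Sum>q\<in>Q. nu' i q) = w i" using tau_w[OF i] by simp
next
  fix q assume q: "q \<in> Q"
  obtain j d k where qe: "q = (j,d,k)" by (cases q) auto
  have j: "j < m" and k: "k < 2^d" using q qe unfolding Qset_def by auto
  have "(\<Sum>i<n. nu' i q) = L j * (\<Sum>i<n. integral {sub_lo d k..sub_hi d k} (\<tau> i j))"
    by (simp add: nu'_def qe sum_distrib_left)
  also have "(\<Sum>i<n. integral {sub_lo d k..sub_hi d k} (\<tau> i j)) = integral {sub_lo d k..sub_hi d k} (\<lambda>s. \<Sum>i<n. \<tau> i j s)"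
    by (rule integral_sum[symmetric]) (use sub_int[OF tau_int[OF _ j] k] in auto)
  also have "\<dots> = integral {sub_lo d k..sub_hi d k} (\<lambda>s. 1)"
    by (rule integral_cong) (use tau_sum[OF j] sub_in[OF k] in auto)
  also have "\<dots> = 1 / 2^d" using lo_le_hi[of d k] hi_minus_lo[of d k] by simp
  finally show "(\<Sum>i<n. nu' i q) = sub_len a b q" by (simp add: qe sub_len_eq)
qed

definition "C = plan_cost n m p a b \<tau>"

lemma tau_term:
  assumes q: "(j,d,k) \<in> Q" and i: "i < n"
  shows "nu' i (j,d,k) * dist (p i) (t (j,d,k)) \<le>
     (1 + \<delta>) * (L j * integral {sub_lo d k..sub_hi d k} (\<lambda>s. \<tau> i j s * dist (p i) (seg a b j s)))
     + e (j,d,k) * nu' i (j,d,k)"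
proof -
  have j: "j < m" and k: "k < 2^d" using q unfolding Qset_def by auto
  define I where "I = {sub_lo d k..sub_hi d k}"
  define D where "D = dist (p i) (t (j,d,k))"
  have tq: "t (j,d,k) \<in> subseg a b (j,d,k)" using t_on q by blast
  have it: "\<tau> i j integrable_on I" unfolding I_def using sub_int[OF tau_int[OF i j] k] .
  have itg: "(\<lambda>s. \<tau> i j s * dist (p i) (seg a b j s)) integrable_on I" unfolding I_def using sub_int[OF tg_int[OF i j] k] .
  have "integral I (\<lambda>s. \<tau> i j s * D) \<le> integral I (\<lambda>s. (1 + \<delta>) * (\<tau> i j s * dist (p i) (seg a b j s)) + e (j,d,k) * \<tau> i j s)"
  proof (rule integral_le)
    show "(\<lambda>s. \<tau> i j s * D) integrable_on I" using integrable_on_mult_left[OF it] by (simp add: mult.commute)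
    show "(\<lambda>s. (1 + \<delta>) * (\<tau> i j s * dist (p i) (seg a b j s)) + e (j,d,k) * \<tau> i j s) integrable_on I"
      using integrable_add[OF integrable_on_mult_right[OF itg] integrable_on_mult_right[OF it]] by simp
    fix s assume s: "s \<in> I"
    have t0: "0 \<le> \<tau> i j s" using tau01[OF i j sub_in[OF k]] s I_def by blast
    have "D \<le> (1 + \<delta>) * dist (p i) (seg a b j s) + e (j,d,k)"
      unfolding D_def using PW[OF q i tq seg_in] s I_def by blast
    then have "\<tau> i j s * D \<le> \<tau> i j s * ((1 + \<delta>) * dist (p i) (seg a b j s) + e (j,d,k))"
      using t0 by (simp add: mult_left_mono)
    then show "\<tau> i j s * D \<le> (1 + \<delta>) * (\<tau> i j s * dist (p i) (seg a b j s)) + e (j,d,k) * \<tau> i j s"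
      by (simp add: algebra_simps)
  qed
  also have "\<dots> = (1 + \<delta>) * integral I (\<lambda>s. \<tau> i j s * dist (p i) (seg a b j s)) + e (j,d,k) * integral I (\<tau> i j)"
    using integrable_on_mult_right[OF itg] integrable_on_mult_right[OF it] by (simp add: integral_add)
  finally have "L j * integral I (\<lambda>s. \<tau> i j s * D) \<le> L j * ((1 + \<delta>) * integral I (\<lambda>s. \<tau> i j s * dist (p i) (seg a b j s)) + e (j,d,k) * integral I (\<tau> i j))"
    by (rule mult_left_mono) simp
  moreover have "integral I (\<lambda>s. \<tau> i j s * D) = integral I (\<tau> i j) * D" by simp
  ultimately show ?thesis unfolding nu'_def D_def I_def by (simp add: algebra_simps)
qed

lemma tau_side: "dplan_cost n p Q t nu' \<le> (1 + \<delta>) * C + (\<Sum>q\<in>Q. e q * sub_len a b q)"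
proof -
  have "dplan_cost n p Q t nu' \<le> (\<Sum>i<n. \<Sum>q\<in>Q. (1 + \<delta>) * (case q of (j,d,k) \<Rightarrow> L j * integral {sub_lo d k..sub_hi d k} (\<lambda>s. \<tau> i j s * dist (p i) (seg a b j s))) + e q * nu' i q)"
    unfolding dplan_cost_def
    apply (intro sum_mono)
    using tau_term by (auto simp: case_prod_beta')
  also have "\<dots> = (1 + \<delta>) * (\<Sum>i<n. \<Sum>q\<in>Q. (case q of (j,d,k) \<Rightarrow> L j * integral {sub_lo d k..sub_hi d k} (\<lambda>s. \<tau> i j s * dist (p i) (seg a b j s))))
      + (\<Sum>q\<in>Q. e q * (\<Sum>i<n. nu' i q))"
    by (simp add: sum.distrib sum_distrib_left sum_distrib_right sum.swap[of _ Q "{..<n}"] algebra_simps)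
  also have "(\<Sum>i<n. \<Sum>q\<in>Q. (case q of (j,d,k) \<Rightarrow> L j * integral {sub_lo d k..sub_hi d k} (\<lambda>s. \<tau> i j s * dist (p i) (seg a b j s)))) = C"
  proof -
    have "(\<Sum>i<n. \<Sum>q\<in>Q. (case q of (j,d,k) \<Rightarrow> L j * integral {sub_lo d k..sub_hi d k} (\<lambda>s. \<tau> i j s * dist (p i) (seg a b j s))))
       = (\<Sum>i<n. \<Sum>j<m. L j * (\<Sum>(d,k)\<in>Qj j. integral {sub_lo d k..sub_hi d k} (\<lambda>s. \<tau> i j s * dist (p i) (seg a b j s))))"
      by (simp add: sum_Q sum_distrib_left case_prod_beta')
    also have "\<dots> = (\<Sum>i<n. \<Sum>j<m. L j * integral {0..1} (\<lambda>s. \<tau> i j s * dist (p i) (seg a b j s)))"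
      by (intro sum.cong refl) (simp add: partition[OF _ tg_int])
    finally show ?thesis unfolding C_def plan_cost_def .
  qed
  also have "(\<Sum>q\<in>Q. e q * (\<Sum>i<n. nu' i q)) = (\<Sum>q\<in>Q. e q * sub_len a b q)"
    using nu'_plan unfolding is_dplan_def by simp
  finally show ?thesis .
qed

end


lemma proj: "\<exists>sp. \<forall>s. \<bar>s - sp\<bar> * dist (a j) (b j) \<le> dist p (seg a b j s)"
proof (cases "b j = a j")
  case True
  then show ?thesis by simp
next
  case False
  define u where "u = b j - a j"
  define v where "v = p - a j"
  have uu: "0 < inner u u" using False u_def by simp
  define sp where "sp = inner v u / inner u u"
  have "\<bar>s - sp\<bar> * dist (a j) (b j) \<le> dist p (seg a b j s)" for s
  proof -
    have d: "dist p (seg a b j s) = norm (v - s *\<^sub>R u)" unfolding seg_def u_def v_def dist_norm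
      by (simp add: algebra_simps)
    have L: "dist (a j) (b j) = norm u" unfolding u_def by (simp add: dist_norm norm_minus_commute)
    have cs: "(inner v u)^2 \<le> inner v v * inner u u" by (rule Cauchy_Schwarz_ineq)
    have "(norm (v - s *\<^sub>R u))^2 = inner (v - s *\<^sub>R u) (v - s *\<^sub>R u)" by (rule power2_norm_eq_inner)
    also have "\<dots> = inner v v - 2 * s * inner v u + s^2 * inner u u"
      by (simp add: inner_diff_left inner_diff_right power2_eq_square algebra_simps inner_commute)
    finally have "(norm (v - s *\<^sub>R u))^2 = inner v v - 2 * s * inner v u + s^2 * inner u u" .
    moreover have "(\<bar>s - sp\<bar> * norm u)^2 = s^2 * inner u u - 2 * s * inner v u + (inner v u)^2 / inner u u"
    proof -
      have "(\<bar>s - sp\<bar> * norm u)^2 = (s - sp)^2 * (norm u)^2" by (simp add: power_mult_distrib)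
      also have "\<dots> = (s - sp)^2 * inner u u" by (simp add: power2_norm_eq_inner)
      also have "\<dots> = s^2 * inner u u - 2 * s * inner v u + (inner v u)^2 / inner u u"
        using uu unfolding sp_def by (simp add: power2_eq_square field_simps)
      finally show ?thesis .
    qed
    moreover have "(inner v u)^2 / inner u u \<le> inner v v" using cs uu by (simp add: divide_le_eq)
    ultimately have "(\<bar>s - sp\<bar> * norm u)^2 \<le> (norm (v - s *\<^sub>R u))^2" by linarith
    then have "\<bar>s - sp\<bar> * norm u \<le> norm (v - s *\<^sub>R u)" by (rule power2_le_imp_le) simp
    then show ?thesis using d L by simp
  qed
  then show ?thesis by blast
qed

lemma ind_int:
  fixes c r :: real
  assumes "0 \<le> r"
  shows "(\<lambda>s. if \<bar>s - c\<bar> \<le> r then 1 else 0::real) integrable_on {0..1}"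
    "integral {0..1} (\<lambda>s. if \<bar>s - c\<bar> \<le> r then 1 else 0::real) \<le> 2 * r"
proof -
  have eq: "(\<lambda>s. if \<bar>s - c\<bar> \<le> r then 1 else 0::real) = (\<lambda>s. if s \<in> {c-r..c+r} then 1 else 0)"
    by (auto simp: abs_le_iff)
  have i: "{c-r..c+r} \<inter> {0..1} = {max (c-r) 0..min (c+r) 1}" by auto
  show "(\<lambda>s. if \<bar>s - c\<bar> \<le> r then 1 else 0::real) integrable_on {0..1}"
    unfolding eq integrable_restrict_Int i by (rule integrable_const_ivl)
  have "integral {0..1} (\<lambda>s. if \<bar>s - c\<bar> \<le> r then 1 else 0::real) = (if max (c-r) 0 \<le> min (c+r) 1 then min (c+r) 1 - max (c-r) 0 else 0)"
    unfolding eq integral_restrict_Int i by simp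
  also have "\<dots> \<le> 2 * r" using assms by auto
  finally show "integral {0..1} (\<lambda>s. if \<bar>s - c\<bar> \<le> r then 1 else 0::real) \<le> 2 * r" .
qed

lemma ind_sum:
  fixes r :: real and n :: nat
  assumes "0 \<le> r"
  shows "(\<lambda>s. \<Sum>k<n. if \<bar>s - sp k\<bar> \<le> r then 1 else 0::real) integrable_on {0..1}"
    "integral {0..1} (\<lambda>s. \<Sum>k<n. if \<bar>s - sp k\<bar> \<le> r then 1 else 0::real) \<le> real n * (2 * r)"
proof -
  show "(\<lambda>s. \<Sum>k<n. if \<bar>s - sp k\<bar> \<le> r then 1 else 0::real) integrable_on {0..1}"
    by (rule integrable_sum) (use ind_int[OF assms] in auto)
  have "integral {0..1} (\<lambda>s. \<Sum>k<n. if \<bar>s - sp k\<bar> \<le> r then 1 else 0::real)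
      = (\<Sum>k<n. integral {0..1} (\<lambda>s. if \<bar>s - sp k\<bar> \<le> r then 1 else 0::real))"
    by (rule integral_sum) (use ind_int[OF assms] in auto)
  also have "\<dots> \<le> (\<Sum>k<n. 2 * r)" by (rule sum_mono) (use ind_int[OF assms] in auto)
  finally show "integral {0..1} (\<lambda>s. \<Sum>k<n. if \<bar>s - sp k\<bar> \<le> r then 1 else 0::real) \<le> real n * (2 * r)" by simp
qed

lemma ind_sum_nonneg: fixes n :: nat shows "0 \<le> (\<Sum>k<n. if \<bar>s - sp k\<bar> \<le> r then 1 else 0::real)"
  by (rule sum_nonneg) auto

lemma ind_sum_ge1: fixes n :: nat shows "i < n \<Longrightarrow> \<bar>s - sp i\<bar> \<le> r \<Longrightarrow> 1 \<le> (\<Sum>k<n. if \<bar>s - sp k\<bar> \<le> r then 1 else 0::real)"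
proof -
  assume "i < n" "\<bar>s - sp i\<bar> \<le> r"
  then have "(if \<bar>s - sp i\<bar> \<le> r then 1 else 0::real) \<le> (\<Sum>k<n. if \<bar>s - sp k\<bar> \<le> r then 1 else 0::real)"
    by (intro member_le_sum) auto
  then show ?thesis using \<open>\<bar>s - sp i\<bar> \<le> r\<close> by simp
qed



context tsetup begin

definition "SP j k = (SOME sp. \<forall>s. \<bar>s - sp\<bar> * L j \<le> dist (p k) (seg a b j s))"

lemma SP: "\<bar>s - SP j k\<bar> * L j \<le> dist (p k) (seg a b j s)"
  using someI_ex[OF proj[where p="p k" and a=a and b=b and j=j]] unfolding SP_def by blast

lemma close_sl:
  assumes "close (j,d,k)"
  shows "sub_len a b (j,d,k) \<le> 2 * r"
proof -
  obtain i where i: "i < n" "\<forall>x\<in>subseg a b (j,d,k). dist (p i) x \<le> r" using assms unfolding close_def by blast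
  have x: "seg a b j (sub_lo d k) \<in> subseg a b (j,d,k)" "seg a b j (sub_hi d k) \<in> subseg a b (j,d,k)"
    using seg_in lo_le_hi by auto
  have "dist (seg a b j (sub_lo d k)) (seg a b j (sub_hi d k)) \<le> dist (seg a b j (sub_lo d k)) (p i) + dist (p i) (seg a b j (sub_hi d k))"
    by (rule dist_triangle)
  also have "\<dots> \<le> 2 * r"
  proof -
    have "dist (p i) (seg a b j (sub_lo d k)) \<le> r" "dist (p i) (seg a b j (sub_hi d k)) \<le> r" using i(2) x by auto
    then show ?thesis by (simp add: dist_commute)
  qed
  finally show ?thesis unfolding sub_len_def by simp
qed

lemma close_len:
  assumes j: "j < m" and Lp: "0 < L j"
  shows "(\<Sum>(d,k)\<in>Qj j. (if close (j,d,k) then 1 else 0) * integral {sub_lo d k..sub_hi d k} (\<lambda>s. 1::real))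
          \<le> real n * (2 * (r / L j))"
proof -
  define F where "F = (\<lambda>s. \<Sum>(d,k)\<in>Qj j. if sub_lo d k \<le> s \<and> s < sub_hi d k then (if close (j,d,k) then 1 else 0) * (1::real) else 0)"
  have hF: "(F has_integral (\<Sum>(d,k)\<in>Qj j. (if close (j,d,k) then 1 else 0) * integral {sub_lo d k..sub_hi d k} (\<lambda>s. 1::real))) {0..1}"
    unfolding F_def by (rule G[OF Qj_fin Qj_k']) (rule integrable_const_ivl)
  define R where "R = (\<lambda>s. \<Sum>k<n. if \<bar>s - SP j k\<bar> \<le> r / L j then 1 else 0::real)"
  have r0: "0 \<le> r / L j" using r_pos Lp by simp
  have le: "F s \<le> R s" for s
  proof (cases "\<exists>(d,k)\<in>Qj j. close (j,d,k) \<and> sub_lo d k \<le> s \<and> s < sub_hi d k")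
    case True
    then obtain d k where dk: "(d,k) \<in> Qj j" "close (j,d,k)" "sub_lo d k \<le> s" "s < sub_hi d k" by blast
    obtain i where i: "i < n" "\<forall>x\<in>subseg a b (j,d,k). dist (p i) x \<le> r" using dk(2) unfolding close_def by blast
    have "dist (p i) (seg a b j s) \<le> r" using i(2) seg_in[of s d k] dk by auto
    then have "\<bar>s - SP j i\<bar> * L j \<le> r" using SP[of s j i] by linarith
    then have "\<bar>s - SP j i\<bar> \<le> r / L j" using Lp by (simp add: le_divide_eq)
    then have R1: "1 \<le> R s" unfolding R_def by (rule ind_sum_ge1[OF i(1)])
    have "F s = (\<Sum>(d,k)\<in>{x\<in>Qj j. close (j, fst x, snd x)}. if sub_lo d k \<le> s \<and> s < sub_hi d k then 1 else 0)"
      unfolding F_def using Qj_fin by (simp add: sum.inter_filter case_prod_beta' if_distrib cong: if_cong) (auto intro!: sum.cong)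
    also have "\<dots> \<le> 1" by (rule at_most_one) auto
    finally show ?thesis using R1 by linarith
  next
    case False
    then have "F s = 0" unfolding F_def by (auto intro!: sum.neutral)
    then show ?thesis unfolding R_def using ind_sum_nonneg by simp
  qed
  have "integral {0..1} F \<le> integral {0..1} R"
    by (rule integral_le[OF has_integral_integrable[OF hF]]) (use ind_sum[OF r0] le R_def in auto)
  also have "\<dots> \<le> real n * (2 * (r / L j))" unfolding R_def by (rule ind_sum[OF r0])
  finally show ?thesis using integral_unique[OF hF] by simp
qed

lemma E_j:
  assumes j: "j < m"
  shows "(\<Sum>(d,k)\<in>Qj j. e (j,d,k) * sub_len a b (j,d,k)) \<le> 4 * real n * r^2"
proof (cases "L j = 0")
  case True
  then show ?thesis by (simp add: sub_len_eq)
next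
  case False
  then have Lp: "0 < L j" by simp
  have "(\<Sum>(d,k)\<in>Qj j. e (j,d,k) * sub_len a b (j,d,k))
      \<le> (\<Sum>(d,k)\<in>Qj j. 2 * r * L j * ((if close (j,d,k) then 1 else 0) * integral {sub_lo d k..sub_hi d k} (\<lambda>s. 1::real)))"
  proof (rule sum_mono)
    fix dk assume "dk \<in> Qj j"
    obtain d k where dk: "dk = (d,k)" by (cases dk) auto
    have int1: "integral {sub_lo d k..sub_hi d k} (\<lambda>s. 1::real) = 1 / 2^d"
      using lo_le_hi[of d k] hi_minus_lo[of d k] by simp
    have sl: "sub_len a b (j,d,k) = L j * (1/2^d)" by (simp add: sub_len_eq)
    show "(case dk of (d,k) \<Rightarrow> e (j,d,k) * sub_len a b (j,d,k)) \<le>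
      (case dk of (d,k) \<Rightarrow> 2 * r * L j * ((if close (j,d,k) then 1 else 0) * integral {sub_lo d k..sub_hi d k} (\<lambda>s. 1::real)))"
    proof (cases "close (j,d,k)")
      case True
      have "sub_len a b (j,d,k) * sub_len a b (j,d,k) \<le> 2 * r * sub_len a b (j,d,k)"
        using close_sl[OF True] by (intro mult_right_mono) (auto simp: sub_len_def)
      moreover have "2 * r * L j * ((if close (j,d,k) then 1 else 0) * integral {sub_lo d k..sub_hi d k} (\<lambda>s. 1::real))
          = 2 * r * sub_len a b (j,d,k)" using True int1 sl by simp
      moreover have "e (j,d,k) * sub_len a b (j,d,k) = sub_len a b (j,d,k) * sub_len a b (j,d,k)"
        using True unfolding e_def by simp
      ultimately show ?thesis unfolding dk prod.case by linarith
    next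
      case False
      then show ?thesis unfolding dk e_def by simp
    qed
  qed
  also have "\<dots> = 2 * r * L j * (\<Sum>(d,k)\<in>Qj j. (if close (j,d,k) then 1 else 0) * integral {sub_lo d k..sub_hi d k} (\<lambda>s. 1::real))"
    by (simp add: sum_distrib_left case_prod_beta')
  also have "\<dots> \<le> 2 * r * L j * (real n * (2 * (r / L j)))"
    using close_len[OF j Lp] r_pos Lp by (intro mult_left_mono) auto
  also have "\<dots> = 4 * real n * r^2" using Lp by (simp add: power2_eq_square field_simps)
  finally show ?thesis .
qed

lemma E_bound: "(\<Sum>q\<in>Q. e q * sub_len a b q) \<le> 4 * \<delta>^2 / (real n * real m)"
proof -
  have "(\<Sum>q\<in>Q. e q * sub_len a b q) = (\<Sum>j<m. \<Sum>(d,k)\<in>Qj j. e (j,d,k) * sub_len a b (j,d,k))"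
    by (rule sum_Q)
  also have "\<dots> \<le> (\<Sum>j<m. 4 * real n * r^2)" by (rule sum_mono) (rule E_j, simp)
  also have "\<dots> = 4 * \<delta>^2 / (real n * real m)"
    using n_pos m_pos unfolding r_def by (simp add: power2_eq_square field_simps)
  finally show ?thesis .
qed

end


context tplan begin

lemma seg_lower:
  assumes j: "j < m"
  shows "L j / (6 * real n) \<le> integral {0..1} (\<lambda>s. \<Sum>i<n. \<tau> i j s * dist (p i) (seg a b j s))"
proof -
  define \<rho> where "\<rho> = 1 / (6 * real n)"
  have rho: "0 < \<rho>" unfolding \<rho>_def using n_pos by simp
  define A where "A = (\<lambda>s. \<Sum>k<n. if \<bar>s - SP j k\<bar> \<le> \<rho> then 1 else 0::real)"
  define B where "B = (\<lambda>s. \<Sum>k<n. if \<bar>s - SP j k\<bar> \<le> 2 * \<rho> then 1 else 0::real)"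
  define h where "h = (\<lambda>s. L j * \<rho> * (2 - A s - B s))"
  have A0: "0 \<le> A s" for s unfolding A_def by (rule ind_sum_nonneg)
  have B0: "0 \<le> B s" for s unfolding B_def by (rule ind_sum_nonneg)
  have Lr: "0 \<le> L j * \<rho>" using rho by simp
  have hg: "h s \<le> dist (p i) (seg a b j s)" if i: "i < n" for i s
  proof -
    define x where "x = \<bar>s - SP j i\<bar>"
    have g: "x * L j \<le> dist (p i) (seg a b j s)" unfolding x_def by (rule SP)
    show ?thesis
    proof (cases "x \<le> \<rho>")
      case True
      have "1 \<le> A s" unfolding A_def using ind_sum_ge1[OF i, of s SP_j] True x_def
        by (intro ind_sum_ge1[OF i]) simp
      moreover have "1 \<le> B s" unfolding B_def using True x_def rho by (intro ind_sum_ge1[OF i]) simp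
      ultimately have "2 - A s - B s \<le> 0" by simp
      then have "h s \<le> 0" unfolding h_def using Lr by (simp add: mult_nonneg_nonpos)
      then show ?thesis using zero_le_dist[of "p i" "seg a b j s"] by linarith
    next
      case False
      show ?thesis
      proof (cases "x \<le> 2 * \<rho>")
        case True
        have "1 \<le> B s" unfolding B_def using True x_def by (intro ind_sum_ge1[OF i]) simp
        then have "2 - A s - B s \<le> 1" using A0[of s] by simp
        then have "h s \<le> L j * \<rho> * 1" unfolding h_def using Lr by (intro mult_left_mono) auto
        also have "\<dots> \<le> x * L j"
        proof -
          have "\<rho> * L j \<le> x * L j" using \<open>\<not> x \<le> \<rho>\<close> by (intro mult_right_mono) auto
          then show ?thesis by (simp add: mult.commute)
        qed
        finally show ?thesis using g by simp
      next
        case False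
        have "2 - A s - B s \<le> 2" using A0[of s] B0[of s] by simp
        then have "h s \<le> L j * \<rho> * 2" unfolding h_def using Lr by (intro mult_left_mono) auto
        also have "\<dots> \<le> x * L j"
        proof -
          have "(2 * \<rho>) * L j \<le> x * L j" using \<open>\<not> x \<le> 2 * \<rho>\<close> by (intro mult_right_mono) auto
          then show ?thesis by (simp add: mult.commute mult.left_commute)
        qed
        finally show ?thesis using g by simp
      qed
    qed
  qed
  have hle: "h s \<le> (\<Sum>i<n. \<tau> i j s * dist (p i) (seg a b j s))" if s: "s \<in> {0..1}" for s
  proof -
    have "h s = (\<Sum>i<n. \<tau> i j s) * h s" using tau_sum[OF j s] by simp
    also have "\<dots> = (\<Sum>i<n. \<tau> i j s * h s)" by (simp add: sum_distrib_right)
    also have "\<dots> \<le> (\<Sum>i<n. \<tau> i j s * dist (p i) (seg a b j s))"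
      by (rule sum_mono) (use hg tau01[OF _ j s] in \<open>auto intro: mult_left_mono\<close>)
    finally show ?thesis .
  qed
  have r0: "0 \<le> \<rho>" "0 \<le> 2 * \<rho>" using rho by auto
  have iA: "A integrable_on {0..1}" "integral {0..1} A \<le> real n * (2 * \<rho>)" unfolding A_def using ind_sum[OF r0(1)] by auto
  have iB: "B integrable_on {0..1}" "integral {0..1} B \<le> real n * (2 * (2 * \<rho>))" unfolding B_def using ind_sum[OF r0(2)] by auto
  have ih: "h integrable_on {0..1}" unfolding h_def
    by (intro integrable_on_mult_right integrable_diff integrable_const_ivl iA iB)
  have "integral {0..1} h = L j * \<rho> * (2 - integral {0..1} A - integral {0..1} B)"
  proof -
    have i2: "(\<lambda>s. 2 - A s) integrable_on {0..1}" by (intro integrable_diff integrable_const_ivl iA)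
    have "integral {0..1} (\<lambda>s. 2 - A s - B s) = integral {0..1} (\<lambda>s. 2 - A s) - integral {0..1} B"
      by (rule integral_diff[OF i2 iB(1)])
    also have "integral {0..1} (\<lambda>s. 2 - A s) = integral {0..1} (\<lambda>s::real. 2::real) - integral {0..1} A"
      using integral_diff[OF integrable_const_ivl[of "2::real" 0 1] iA(1)] by simp
    finally have "integral {0..1} (\<lambda>s. 2 - A s - B s) = 2 - integral {0..1} A - integral {0..1} B" by simp
    then show ?thesis unfolding h_def by simp
  qed
  also have "\<dots> \<ge> L j * \<rho> * 1"
  proof -
    have "real n * (2 * \<rho>) + real n * (2 * (2 * \<rho>)) = 1" unfolding \<rho>_def using n_pos by simp
    then have "1 \<le> 2 - integral {0..1} A - integral {0..1} B" using iA iB by linarith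
    then show ?thesis using Lr by (intro mult_left_mono) auto
  qed
  finally have "L j * \<rho> \<le> integral {0..1} h" by simp
  also have "\<dots> \<le> integral {0..1} (\<lambda>s. \<Sum>i<n. \<tau> i j s * dist (p i) (seg a b j s))"
    by (rule integral_le[OF ih]) (use tg_int[OF _ j] hle in \<open>auto intro!: integrable_sum\<close>)
  finally show ?thesis unfolding \<rho>_def by simp
qed

lemma C_lower: "1 / (6 * real n * real m) \<le> C"
proof -
  have "C = (\<Sum>j<m. L j * integral {0..1} (\<lambda>s. \<Sum>i<n. \<tau> i j s * dist (p i) (seg a b j s)))"
  proof -
    have "C = (\<Sum>j<m. \<Sum>i<n. L j * integral {0..1} (\<lambda>s. \<tau> i j s * dist (p i) (seg a b j s)))"
      unfolding C_def plan_cost_def by (rule sum.swap)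
    also have "\<dots> = (\<Sum>j<m. L j * integral {0..1} (\<lambda>s. \<Sum>i<n. \<tau> i j s * dist (p i) (seg a b j s)))"
    proof (rule sum.cong[OF refl])
      fix j assume "j \<in> {..<m}"
      then have j: "j < m" by simp
      have "integral {0..1} (\<lambda>s. \<Sum>i<n. \<tau> i j s * dist (p i) (seg a b j s)) = (\<Sum>i<n. integral {0..1} (\<lambda>s. \<tau> i j s * dist (p i) (seg a b j s)))"
        by (rule integral_sum) (use tg_int[OF _ j] in auto)
      then show "(\<Sum>i<n. L j * integral {0..1} (\<lambda>s. \<tau> i j s * dist (p i) (seg a b j s))) = L j * integral {0..1} (\<lambda>s. \<Sum>i<n. \<tau> i j s * dist (p i) (seg a b j s))"
        by (simp add: sum_distrib_left)
    qed
    finally show ?thesis .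
  qed
  also have "\<dots> \<ge> (\<Sum>j<m. L j * (L j / (6 * real n)))"
  proof (rule sum_mono)
    fix j assume "j \<in> {..<m}"
    then show "L j * (L j / (6 * real n)) \<le> L j * integral {0..1} (\<lambda>s. \<Sum>i<n. \<tau> i j s * dist (p i) (seg a b j s))"
      by (intro mult_left_mono[OF seg_lower]) auto
  qed
  finally have C1: "(\<Sum>j<m. L j * (L j / (6 * real n))) \<le> C" .
  have "0 \<le> (\<Sum>j<m. (L j - 1 / real m)^2)" by (rule sum_nonneg) simp
  also have "\<dots> = (\<Sum>j<m. L j * L j) - 2 / real m * (\<Sum>j<m. L j) + real m * (1 / real m)^2"
    by (simp add: power2_eq_square algebra_simps sum.distrib sum_subtractf sum_distrib_left)
  also have "\<dots> = (\<Sum>j<m. L j * L j) - 1 / real m"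
    using len_total m_pos by (simp add: power2_eq_square field_simps)
  finally have "1 / real m \<le> (\<Sum>j<m. L j * L j)" by simp
  then have "1 / real m / (6 * real n) \<le> (\<Sum>j<m. L j * L j) / (6 * real n)"
    using n_pos by (intro divide_right_mono) auto
  moreover have "(\<Sum>j<m. L j * L j) / (6 * real n) = (\<Sum>j<m. L j * (L j / (6 * real n)))"
    by (simp add: sum_divide_distrib)
  moreover have "1 / real m / (6 * real n) = 1 / (6 * real n * real m)" by simp
  ultimately show ?thesis using C1 by linarith
qed

lemma main_bound: "plan_cost n m p a b (spread a b Q \<nu>) \<le> (1 + 17 * \<delta>) * C"
proof -
  define E where "E = (\<Sum>q\<in>Q. e q * sub_len a b q)"
  define z where "z = 1 / (real n * real m)"
  have z0: "0 < z" unfolding z_def using n_pos m_pos by simp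
  have E0: "0 \<le> E" unfolding E_def
  proof (rule sum_nonneg)
    fix q assume "q \<in> Q"
    have "0 \<le> sub_len a b q" by (cases q) (simp add: sub_len_def)
    then show "0 \<le> e q * sub_len a b q" using e_nonneg by simp
  qed
  have Eb: "E \<le> 4 * \<delta>^2 * z" unfolding E_def z_def using E_bound by simp
  have Cb: "z / 6 \<le> C" unfolding z_def using C_lower by simp
  have "dplan_cost n p Q t \<nu> \<le> dplan_cost n p Q t nu'" using nu_opt nu'_plan by blast
  also have "\<dots> \<le> (1 + \<delta>) * C + E" unfolding E_def by (rule tau_side)
  finally have d: "dplan_cost n p Q t \<nu> \<le> (1 + \<delta>) * C + E" .
  have "plan_cost n m p a b (spread a b Q \<nu>) \<le> (1 + \<delta>) * dplan_cost n p Q t \<nu> + E"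
    unfolding E_def by (rule spread_side)
  also have "\<dots> \<le> (1 + \<delta>) * ((1 + \<delta>) * C + E) + E" using d delta by (intro add_right_mono mult_left_mono) auto
  also have "\<dots> \<le> (1 + 17 * \<delta>) * C"
  proof -
    have C0: "0 \<le> C" using Cb z0 by linarith
    have "(2 + \<delta>) * E \<le> (2 + \<delta>) * (4 * \<delta>^2 * z)" using Eb delta by (intro mult_left_mono) auto
    also have "\<dots> \<le> 9 * \<delta>^2 * z"
    proof -
      have "(2 + \<delta>) * 4 \<le> 9" using delta by simp
      then have "(2 + \<delta>) * 4 * (\<delta>^2 * z) \<le> 9 * (\<delta>^2 * z)" using z0 by (intro mult_right_mono) auto
      then show ?thesis by (simp add: algebra_simps)
    qed
    also have "\<dots> \<le> (15 * \<delta> - \<delta>^2) * (z / 6)"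
    proof -
      have "55 * \<delta> \<le> 15" using delta by simp
      then have "55 * \<delta> * (\<delta> * z) \<le> 15 * (\<delta> * z)" using z0 delta by (intro mult_right_mono) auto
      then show ?thesis by (simp add: power2_eq_square algebra_simps)
    qed
    also have "\<dots> \<le> (15 * \<delta> - \<delta>^2) * C"
    proof -
      have "0 \<le> 15 * \<delta> - \<delta>^2" using delta by (simp add: power2_eq_square)
      then show ?thesis using Cb by (intro mult_left_mono) auto
    qed
    finally have "(2 + \<delta>) * E \<le> (15 * \<delta> - \<delta>^2) * C" .
    then show ?thesis by (simp add: power2_eq_square algebra_simps)
  qed
  finally show ?thesis .
qed

end



theorem theorem2:
  fixes n m :: nat and p :: "nat \<Rightarrow> real^2" and w :: "nat \<Rightarrow> real"
    and a b :: "nat \<Rightarrow> real^2" and \<delta> :: real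
    and t :: "nat \<times> nat \<times> nat \<Rightarrow> real^2"
    and \<nu> :: "nat \<Rightarrow> nat \<times> nat \<times> nat \<Rightarrow> real"
  assumes w_pos: "\<forall>i<n. 0 < w i"
    and w_total: "(\<Sum>i<n. w i) = 1"
    and len_total: "(\<Sum>j<m. dist (a j) (b j)) = 1"
    and delta: "0 < \<delta>" "\<delta> \<le> 1/4"
    and t_on: "\<forall>q\<in>Qset n m p a b \<delta>. t q \<in> subseg a b q"
    and nu_plan: "is_dplan n w (Qset n m p a b \<delta>) (sub_len a b) \<nu>"
    and nu_opt: "\<forall>\<nu>'. is_dplan n w (Qset n m p a b \<delta>) (sub_len a b) \<nu>' \<longrightarrow>
                   dplan_cost n p (Qset n m p a b \<delta>) t \<nu> \<le> dplan_cost n p (Qset n m p a b \<delta>) t \<nu>'"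
  shows "plan_cost n m p a b (spread a b (Qset n m p a b \<delta>) \<nu>) \<le> (1 + 17 * \<delta>) * emd n m p w a b"
proof -
  have ts: "tsetup n m p w a b \<delta> t \<nu>"
    by (rule tsetup.intro) (fact w_pos w_total len_total delta t_on nu_plan nu_opt)+
  define X where "X = plan_cost n m p a b (spread a b (Qset n m p a b \<delta>) \<nu>)"
  define S where "S = {plan_cost n m p a b tau | tau. is_plan n m w a b tau}"
  have bound: "X \<le> (1 + 17 * \<delta>) * c" if "c \<in> S" for c
  proof -
    obtain \<tau> where tau: "is_plan n m w a b \<tau>" "c = plan_cost n m p a b \<tau>" using \<open>c \<in> S\<close> S_def by blast
    have tp: "tplan n m p w a b \<delta> t \<nu> \<tau>"
      by (rule tplan.intro[OF ts]) (rule tplan_axioms.intro[OF tau(1)])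
    show ?thesis using tplan.main_bound[OF tp] tau(2) unfolding tplan.C_def[OF tp] X_def by simp
  qed
  have ne: "S \<noteq> {}"
  proof -
    define \<tau>0 where "\<tau>0 = (\<lambda>(i::nat) (j::nat) (s::real). w i)"
    have wle: "w i \<le> 1" if "i < n" for i
    proof -
      have "w i \<le> (\<Sum>i<n. w i)" using that w_pos by (intro member_le_sum) auto
      then show ?thesis using w_total by simp
    qed
    have "is_plan n m w a b \<tau>0"
      unfolding is_plan_def \<tau>0_def
    proof (intro conjI allI impI ballI)
      fix i j s assume "i < n" "j < m" "s \<in> {0..1::real}"
      then show "0 \<le> w i" "w i \<le> 1" using w_pos wle by (auto simp: less_imp_le)
    next
      fix i j assume "i < n" "j < m"
      show "(\<lambda>s. w i) integrable_on {0..1::real}" by (rule integrable_const_ivl)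
    next
      fix i assume "i < n"
      have "(\<Sum>j<m. dist (a j) (b j) * integral {0..1::real} (\<lambda>s. w i)) = (\<Sum>j<m. dist (a j) (b j)) * w i"
        by (simp add: sum_distrib_right)
      then show "(\<Sum>j<m. dist (a j) (b j) * integral {0..1::real} (\<lambda>s. w i)) = w i" using len_total by simp
    next
      fix j s assume "j < m" "s \<in> {0..1::real}"
      show "(\<Sum>i<n. w i) = 1" by (rule w_total)
    qed
    then show ?thesis unfolding S_def by blast
  qed
  have pos: "0 < 1 + 17 * \<delta>" using delta by simp
  have "X / (1 + 17 * \<delta>) \<le> Inf S"
  proof (rule cInf_greatest[OF ne])
    fix c assume "c \<in> S"
    then show "X / (1 + 17 * \<delta>) \<le> c" using bound pos by (simp add: divide_le_eq mult.commute)
  qed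
  then have "X \<le> (1 + 17 * \<delta>) * Inf S" using pos by (simp add: divide_le_eq mult.commute)
  then show ?thesis unfolding X_def S_def emd_def .
qed


end
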